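(* Let $F$ be a finite extension of $\mathbb{Q}_p$, $G$ a finite abelian group of odd order, and $h\in\mathrm{Hom}(\Omega_F,G)$ wildly and weakly ramified with $[F^h:F]=p$. Put $L=F^h$, let $\tau$ generate $\mathrm{Gal}(L/F)$, let $\zeta$ be a primitive $p$-th root of unity, let $\alpha'\in A^h$ with $A^h=\mathcal{O}_F\mathrm{Gal}(L/F)\cdot\alpha'$, and $y_i=\sum_{k\in\mathbb{F}_p}\tau^k(\alpha')\zeta^{-ik}$ for $i\in\mathbb F_p$. Let $n\mid p-1$ be such that the image of $\mathrm{Gal}(F(\zeta)/F)$ in $\mathbb F_p^\times$ (via $\omega(\zeta)=\zeta^i$) equals $R_n$, let $d\in\mathbb F_p$ be the class of $(p-1)/n$, and let $\widetilde\tau\in\mathrm{Gal}(L(\zeta)/F(\zeta))$ be the element restricting to $\tau$ on $L$. Then for all $j,k\in\mathbb{F}_p$, \[ \widetilde{\tau}^{j}\Big(\prod_{i\in R_n}y_i^{c(i^{-1}k)}\Big)=\zeta^{jkd}\prod_{i\in R_n}y_i^{c(i^{-1}k)}, \] and consequently, with $\alpha=\frac1p\sum_{k\in\mathbb F_p}\prod_{i\in R_n}y_i^{c(i^{-1}k)}$, for all $j\in\mathbb F_p$, \[ \tau^j(\alpha)=\frac{1}{p}\sum_{k\in\mathbb{F}_p}\Big(\zeta^{jkd}\prod_{i\in R_n}y_i^{c(i^{-1}k)}\Big). \]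
   Context: $F^h$ is the fixed field of $\ker h$ in $F^c$; wildly/weakly ramified refer to $F^h/F$ being wildly ramified / having trivial second lower ramification group. $A^h$ is the square root of the inverse different of $L/F$. Since $[L:F]=p$ and $[F(\zeta):F]$ are coprime, $\mathrm{Gal}(L(\zeta)/F)\cong\mathrm{Gal}(F(\zeta)/F)\times\mathrm{Gal}(L/F)$, so $\widetilde\tau$ is well defined, and $\alpha\in L$. $R_n=(\mathbb F_p^\times)^n$; $i^{-1}$ is the inverse in $\mathbb F_p^\times$; $c(i)$ is the unique integer in $[\frac{1-p}2,\frac{p-1}2]$ representing $i\in\mathbb F_p$; $\zeta^j$ and $\tau^j$ for $j\in\mathbb F_p$ mean powers by any integer representative. *)

theory Defs
  imports "HOL-Number_Theory.Number_Theory"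
begin

definition centred_rep :: "nat \<Rightarrow> int \<Rightarrow> int" where
  "centred_rep p x = (THE r. (1 - int p) div 2 \<le> r \<and> r \<le> (int p - 1) div 2 \<and> [r = x] (mod int p))"

definition fp_div :: "nat \<Rightarrow> nat \<Rightarrow> nat \<Rightarrow> nat" where
  "fp_div p k i = (THE m. m < p \<and> [i * m = k] (mod p))"

definition Rn :: "nat \<Rightarrow> nat \<Rightarrow> nat set" where
  "Rn p n = {(x ^ n) mod p | x. 1 \<le> x \<and> x < p}"

definition yvec :: "nat \<Rightarrow> ('a::field \<Rightarrow> 'a) \<Rightarrow> 'a \<Rightarrow> 'a \<Rightarrow> nat \<Rightarrow> 'a" where
  "yvec p \<tau> \<zeta> \<alpha>' i = (\<Sum>k<p. (\<tau> ^^ k) \<alpha>' * \<zeta> powi (- (int i * int k)))"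

definition Pk :: "nat \<Rightarrow> nat \<Rightarrow> ('a::field \<Rightarrow> 'a) \<Rightarrow> 'a \<Rightarrow> 'a \<Rightarrow> nat \<Rightarrow> 'a" where
  "Pk p n \<tau> \<zeta> \<alpha>' k = (\<Prod>i\<in>Rn p n. yvec p \<tau> \<zeta> \<alpha>' i powi centred_rep p (int (fp_div p k i)))"

end

theory Submission imports Defs begin

lemma card_Rn:
  assumes p: "prime p" and nd: "n dvd p - 1"
  shows "card (Rn p n) = (p - 1) div n"
proof -
  have p1: "p > 1" using p prime_gt_1_nat by blast
  obtain g where g: "residue_primroot p g" using prime_primitive_root_exists[OF _ p] p1 by blast
  have tot: "totient p = p - 1" using p totient_prime by blast
  have bij: "bij_betw (\<lambda>i. g ^ i mod p) {..<p-1} {0<..<p}"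
    using residue_primroot_is_generator[OF p1 g] tot totatives_prime[OF p] by simp
  have ordg: "ord p g = p - 1" using g tot by (simp add: residue_primroot_def)
  have g1: "[g ^ (p-1) = 1] (mod p)" using ord_works[of g p] ordg by simp
  define q where "q = (p - 1) div n"
  have n0: "n > 0" using nd p1 by (metis dvd_0_left_iff gr0I less_numeral_extra(3) zero_less_diff)
  have qn: "q * n = p - 1" using nd by (simp add: q_def)
  have q0: "q > 0" using qn p1 by (metis diff_is_0_eq gr0I leD mult_zero_left)
  have red: "g ^ (a * n) mod p = g ^ ((a mod q) * n) mod p" for a
  proof -
    have "a * n = (a mod q) * n + (a div q) * (p - 1)"
      using qn by (metis add.commute div_mult_mod_eq distrib_right mult.assoc mult.commute)
    hence "g ^ (a*n) = g ^ ((a mod q) * n) * (g ^ (p-1)) ^ (a div q)"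
      by (metis power_add power_mult mult.commute)
    moreover have "[(g ^ (p-1)) ^ (a div q) = 1] (mod p)"
      using cong_pow[OF g1] by fastforce
    ultimately have "[g ^ (a*n) = g ^ ((a mod q) * n) * 1] (mod p)"
      by (metis cong_mult cong_refl)
    thus ?thesis by (simp add: cong_def)
  qed
  have eq: "Rn p n = (\<lambda>b. g ^ (b * n) mod p) ` {..<q}"
  proof
    show "Rn p n \<subseteq> (\<lambda>b. g ^ (b * n) mod p) ` {..<q}"
    proof
      fix y assume "y \<in> Rn p n"
      then obtain x where x: "1 \<le> x" "x < p" "y = x ^ n mod p" unfolding Rn_def by blast
      then have "x \<in> {0<..<p}" by auto
      then have "x \<in> (\<lambda>i. g ^ i mod p) ` {..<p-1}" using bij unfolding bij_betw_def by simp
      then obtain a where a: "a < p - 1" "x = g ^ a mod p" by auto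
      have "y = g ^ (a * n) mod p" using x a by (simp add: power_mod power_mult)
      also have "\<dots> = g ^ ((a mod q) * n) mod p" by (rule red)
      finally show "y \<in> (\<lambda>b. g ^ (b * n) mod p) ` {..<q}" using q0 by auto
    qed
  next
    show "(\<lambda>b. g ^ (b * n) mod p) ` {..<q} \<subseteq> Rn p n"
    proof
      fix y assume "y \<in> (\<lambda>b. g ^ (b * n) mod p) ` {..<q}"
      then obtain b where b: "b < q" "y = g ^ (b * n) mod p" by auto
      have "b * n < p - 1" using b qn n0 mult_less_mono1[of b q n] by auto
      moreover have "b \<le> b * n" using n0 by simp
      ultimately have "b < p - 1" by linarith
      hence "g ^ b mod p \<in> {0<..<p}" using bij unfolding bij_betw_def by auto
      moreover have "y = (g ^ b mod p) ^ n mod p" using b by (simp add: power_mod power_mult)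
      ultimately show "y \<in> Rn p n" unfolding Rn_def by force
    qed
  qed
  have inj: "inj_on (\<lambda>b. g ^ (b * n) mod p) {..<q}"
  proof (rule inj_onI)
    fix a b assume a: "a \<in> {..<q}" and b: "b \<in> {..<q}" and e: "g ^ (a * n) mod p = g ^ (b * n) mod p"
    have "a * n < p - 1" "b * n < p - 1" using a b qn n0 mult_less_mono1[of a q n] mult_less_mono1[of b q n] by auto
    hence "a * n = b * n" using e bij unfolding bij_betw_def inj_on_def by (meson lessThan_iff)
    thus "a = b" using n0 by simp
  qed
  show ?thesis unfolding eq q_def[symmetric] using inj by (simp add: card_image)
qed


lemma fp_div_cong:
  assumes p: "prime p" and i: "0 < i" "i < p"
  shows "[i * fp_div p k i = k] (mod p)" "fp_div p k i < p"
proof -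
  have cop: "coprime i p" using p i
    by (metis coprime_commute le_less_trans nat_dvd_not_less prime_imp_coprime_nat nat_less_le)
  obtain x where x: "[i * x = 1] (mod p)" using cong_solve_coprime_nat[OF cop] by auto
  define m where "m = (x * k) mod p"
  have p0: "p > 0" using i by simp
  have ex: "m < p \<and> [i * m = k] (mod p)"
  proof
    show "m < p" using p0 by (simp add: m_def)
    have "[i * m = i * (x * k)] (mod p)" unfolding m_def by (simp add: cong_def mod_mult_right_eq)
    moreover have "[i * (x * k) = 1 * k] (mod p)" using cong_mult[OF x cong_refl[of k]] by (simp add: mult.assoc)
    ultimately show "[i * m = k] (mod p)" by (metis cong_trans mult_1)
  qed
  have uniq: "m' = m" if "m' < p \<and> [i * m' = k] (mod p)" for m'
  proof -
    have "[i * m' = i * m] (mod p)" using that ex by (metis cong_sym cong_trans)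
    hence "[m' = m] (mod p)" using cop by (metis cong_mult_lcancel_nat coprime_commute)
    thus ?thesis using that ex cong_less_modulus_unique_nat by blast
  qed
  have "fp_div p k i < p \<and> [i * fp_div p k i = k] (mod p)"
    unfolding fp_div_def by (rule theI[of "\<lambda>m. m < p \<and> [i * m = k] (mod p)" m]) (rule ex, erule uniq)
  thus "[i * fp_div p k i = k] (mod p)" "fp_div p k i < p" by auto
qed

lemma centred_rep_cong:
  assumes p: "p > 2"
  shows "[centred_rep p x = x] (mod int p)"
proof -
  define P where "P = int p"
  have P2: "P > 2" using p by (simp add: P_def)
  define r where "r = (if x mod P \<le> (P - 1) div 2 then x mod P else x mod P - P)"
  have ex: "(1 - P) div 2 \<le> r \<and> r \<le> (P - 1) div 2 \<and> [r = x] (mod P)"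
  proof (intro conjI)
    have a: "0 \<le> x mod P" "x mod P < P" using P2 by auto
    show "(1 - P) div 2 \<le> r" using a unfolding r_def by (auto split: if_splits)
    show "r \<le> (P - 1) div 2" using a unfolding r_def by (auto split: if_splits)
    show "[r = x] (mod P)" unfolding r_def cong_def by auto
  qed
  have uniq: "r' = r" if "(1 - P) div 2 \<le> r' \<and> r' \<le> (P - 1) div 2 \<and> [r' = x] (mod P)" for r'
  proof -
    have "[r' = r] (mod P)" using that ex by (metis cong_sym cong_trans)
    then obtain t where t: "r' - r = P * t" by (metis cong_iff_dvd_diff dvd_def)
    have "\<bar>r' - r\<bar> < P" using that ex by auto
    hence "P * \<bar>t\<bar> < P * 1" using t P2 by (simp add: abs_mult)
    hence "\<bar>t\<bar> < 1" using P2 by (simp only: mult_less_cancel_left_pos)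
    hence "t = 0" by simp
    thus ?thesis using t by simp
  qed
  have "(1 - P) div 2 \<le> centred_rep p x \<and> centred_rep p x \<le> (P - 1) div 2 \<and> [centred_rep p x = x] (mod P)"
    unfolding centred_rep_def P_def[symmetric] by (rule theI[of "\<lambda>r. (1 - P) div 2 \<le> r \<and> r \<le> (P - 1) div 2 \<and> [r = x] (mod P)" r]) (rule ex, erule uniq)
  thus ?thesis by (simp add: P_def)
qed


definition fhom :: "('a::field \<Rightarrow> 'a) \<Rightarrow> bool" where
  "fhom f \<longleftrightarrow> (\<forall>x y. f (x + y) = f x + f y) \<and> (\<forall>x y. f (x * y) = f x * f y) \<and> f 1 = 1"

lemma fhom_funpow: "fhom f \<Longrightarrow> fhom (f ^^ j)"
  by (induction j) (auto simp: fhom_def)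

lemma fhom_0: "fhom f \<Longrightarrow> f 0 = 0"
  unfolding fhom_def by (metis add_cancel_right_right add_0)

lemma fhom_add: "fhom f \<Longrightarrow> f (x + y) = f x + f y" by (simp add: fhom_def)
lemma fhom_mult: "fhom f \<Longrightarrow> f (x * y) = f x * f y" by (simp add: fhom_def)

lemma fhom_inverse: assumes "fhom f" shows "f (inverse x) = inverse (f x)"
proof (cases "x = 0")
  case True then show ?thesis using fhom_0[OF assms] by simp
next
  case False
  have "f x * f (inverse x) = 1" using assms False unfolding fhom_def by (metis right_inverse)
  thus ?thesis by (metis inverse_unique)
qed

lemma fhom_power: "fhom f \<Longrightarrow> f (x ^ m) = f x ^ m"
  by (induction m) (auto simp: fhom_def)

lemma fhom_powi: assumes "fhom f" shows "f (x powi c) = f x powi c"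
proof (cases "c \<ge> 0")
  case True
  then obtain m where "c = int m" by (metis nonneg_int_cases)
  thus ?thesis using fhom_power[OF assms] by simp
next
  case False
  define m where "m = nat (- c)"
  have "c = - int m" using False by (simp add: m_def)
  thus ?thesis using fhom_power[OF assms] fhom_inverse[OF assms] by (simp add: power_int_minus)
qed

lemma fhom_sum: "fhom f \<Longrightarrow> f (sum g A) = sum (\<lambda>x. f (g x)) A"
  by (induction A rule: infinite_finite_induct) (auto simp: fhom_0 fhom_add)

lemma fhom_prod: "fhom f \<Longrightarrow> f (prod g A) = prod (\<lambda>x. f (g x)) A"
  by (induction A rule: infinite_finite_induct) (auto simp: fhom_def)

lemma fhom_of_nat: "fhom f \<Longrightarrow> f (of_nat m) = of_nat m"
  by (induction m) (auto simp: fhom_def fhom_0)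

lemma prod_powi_sum: "(z::'a::field) \<noteq> 0 \<Longrightarrow> (\<Prod>i\<in>A. z powi a i) = z powi (\<Sum>i\<in>A. a i)"
  by (induction A rule: infinite_finite_induct) (auto simp: power_int_add)

lemma root_powi_cong:
  assumes z: "(z::'a::field) ^ p = 1" "p > 0" and c: "[a = b] (mod int p)"
  shows "z powi a = z powi b"
proof -
  have z0: "z \<noteq> 0" proof assume "z = 0" thus False using z by (simp add: power_0_left) qed
  have "int p dvd a - b" using c by (simp add: cong_iff_dvd_diff)
  then obtain t where "a - b = int p * t" by (elim dvdE)
  hence t: "a = b + int p * t" by simp
  have "z powi a = z powi b * (z ^ p) powi t"
    using z0 t by (simp add: power_int_add power_int_mult)
  thus ?thesis using z by simp
qed

lemma Rn_range: assumes "prime p" "i \<in> Rn p n" shows "0 < i" "i < p"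
proof -
  obtain x where x: "1 \<le> x" "x < p" "i = x ^ n mod p" using assms unfolding Rn_def by blast
  show "i < p" using x assms prime_gt_0_nat by simp
  have "\<not> p dvd x" using x by (simp add: nat_dvd_not_less)
  hence "\<not> p dvd x ^ n" using assms prime_dvd_power by blast
  thus "0 < i" using x by (simp add: dvd_eq_mod_eq_0)
qed


theorem proposition5p7:
  fixes p n :: nat and \<tau> :: "'a::field_char_0 \<Rightarrow> 'a" and \<zeta> \<alpha>' :: 'a
  assumes "prime p" and "p > 2"
    and "n dvd p - 1"
    and aut: "bij \<tau>" "\<And>x y. \<tau> (x + y) = \<tau> x + \<tau> y" "\<And>x y. \<tau> (x * y) = \<tau> x * \<tau> y"
    and order: "\<tau> ^^ p = id"
    and zeta: "\<zeta> ^ p = 1" "\<zeta> \<noteq> 1" "\<tau> \<zeta> = \<zeta>"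
    and normal_basis: "\<And>c :: nat \<Rightarrow> 'a. (\<forall>k<p. \<tau> (c k) = c k) \<Longrightarrow>
        (\<Sum>k<p. c k * (\<tau> ^^ k) \<alpha>') = 0 \<Longrightarrow> \<forall>k<p. c k = 0"
  shows "(\<forall>j<p. \<forall>k<p. (\<tau> ^^ j) (Pk p n \<tau> \<zeta> \<alpha>' k)
            = \<zeta> ^ (j * k * (((p - 1) div n) mod p)) * Pk p n \<tau> \<zeta> \<alpha>' k)
       \<and> (\<forall>j<p. (\<tau> ^^ j) ((1 / of_nat p) * (\<Sum>k<p. Pk p n \<tau> \<zeta> \<alpha>' k))
            = (1 / of_nat p) * (\<Sum>k<p. \<zeta> ^ (j * k * (((p - 1) div n) mod p)) * Pk p n \<tau> \<zeta> \<alpha>' k))"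
proof -
  have p0: "p > 0" using assms(2) by simp
  have z0: "\<zeta> \<noteq> 0" proof assume "\<zeta> = 0" thus False using zeta(1) p0 by (simp add: power_0_left) qed
  have t1: "\<tau> 1 = 1"
  proof -
    obtain x where x: "\<tau> x = 1" using aut(1) by (metis bij_pointE)
    have "\<tau> 1 = \<tau> 1 * \<tau> x" using x by simp
    also have "\<dots> = \<tau> (1 * x)" using aut(3) by metis
    finally show ?thesis using x by simp
  qed
  have h: "fhom \<tau>" unfolding fhom_def using aut t1 by blast
  have tz: "\<tau> (\<zeta> powi c) = \<zeta> powi c" for c using fhom_powi[OF h] zeta(3) by simp
  have ystep: "\<tau> (yvec p \<tau> \<zeta> \<alpha>' i) = \<zeta> ^ i * yvec p \<tau> \<zeta> \<alpha>' i" for i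
  proof -
    define g where "g k = (\<tau> ^^ k) \<alpha>' * \<zeta> powi (- (int i * int k))" for k
    have y: "yvec p \<tau> \<zeta> \<alpha>' i = sum g {..<p}" unfolding yvec_def g_def by simp
    have "\<tau> (sum g {..<p}) = (\<Sum>k<p. \<tau> (g k))" by (rule fhom_sum[OF h])
    also have "\<dots> = (\<Sum>k<p. \<zeta> ^ i * g (Suc k))"
    proof (rule sum.cong[OF refl])
      fix k
      have e: "\<zeta> ^ i * \<zeta> powi (- (int i * int (Suc k))) = \<zeta> powi (- (int i * int k))"
      proof -
        have "\<zeta> ^ i * \<zeta> powi (- (int i * int (Suc k))) = \<zeta> powi (int i + - (int i * int (Suc k)))"
          using z0 power_int_add[of \<zeta> "int i" "- (int i * int (Suc k))"] by simp
        also have "int i + - (int i * int (Suc k)) = - (int i * int k)" by (simp add: algebra_simps)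
        finally show ?thesis .
      qed
      have "\<tau> (g k) = (\<tau> ^^ Suc k) \<alpha>' * \<zeta> powi (- (int i * int k))"
        unfolding g_def using fhom_mult[OF h] tz by simp
      also have "\<dots> = \<zeta> ^ i * g (Suc k)" unfolding g_def using e by (simp add: algebra_simps)
      finally show "\<tau> (g k) = \<zeta> ^ i * g (Suc k)" .
    qed
    also have "\<dots> = \<zeta> ^ i * (\<Sum>k<p. g (Suc k))" by (simp add: sum_distrib_left)
    also have "(\<Sum>k<p. g (Suc k)) = sum g {..<p}"
    proof -
      have gp: "g p = g 0"
      proof -
        have "\<zeta> powi (- (int i * int p)) = \<zeta> powi 0"
          by (rule root_powi_cong[OF zeta(1) p0]) (simp add: cong_iff_dvd_diff)
        thus ?thesis unfolding g_def using order by simp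
      qed
      have "g 0 + (\<Sum>k<p. g (Suc k)) = sum g {..<Suc p}" by (simp only: sum.lessThan_Suc_shift)
      also have "\<dots> = sum g {..<p} + g p" by simp
      finally show ?thesis using gp by simp
    qed
    finally show ?thesis using y by simp
  qed
  have yj: "(\<tau> ^^ j) (yvec p \<tau> \<zeta> \<alpha>' i) = \<zeta> ^ (i * j) * yvec p \<tau> \<zeta> \<alpha>' i" for i j
  proof (induction j)
    case 0 then show ?case by simp
  next
    case (Suc j)
    have "(\<tau> ^^ Suc j) (yvec p \<tau> \<zeta> \<alpha>' i) = \<tau> (\<zeta> ^ (i * j) * yvec p \<tau> \<zeta> \<alpha>' i)"
      using Suc by simp
    also have "\<dots> = \<zeta> ^ (i * j) * (\<zeta> ^ i * yvec p \<tau> \<zeta> \<alpha>' i)"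
      using fhom_mult[OF h] fhom_power[OF h] zeta(3) ystep by simp
    finally show ?case by (simp add: power_add algebra_simps)
  qed
  define q where "q = (p - 1) div n"
  have cardR: "card (Rn p n) = q" unfolding q_def by (rule card_Rn[OF assms(1) assms(3)])
  have finR: "finite (Rn p n)"
  proof -
    have "Rn p n \<subseteq> {..<p}" using Rn_range[OF assms(1)] by auto
    thus ?thesis using finite_subset by blast
  qed
  have part1: "(\<tau> ^^ j) (Pk p n \<tau> \<zeta> \<alpha>' k) = \<zeta> ^ (j * k * (q mod p)) * Pk p n \<tau> \<zeta> \<alpha>' k" for j k
  proof -
    define c where "c i = centred_rep p (int (fp_div p k i))" for i
    have hj: "fhom (\<tau> ^^ j)" by (rule fhom_funpow[OF h])
    have "(\<tau> ^^ j) (Pk p n \<tau> \<zeta> \<alpha>' k) = (\<Prod>i\<in>Rn p n. (\<zeta> ^ (i * j) * yvec p \<tau> \<zeta> \<alpha>' i) powi c i)"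
      unfolding Pk_def c_def by (simp only: fhom_prod[OF hj] fhom_powi[OF hj] yj)
    also have "\<dots> = (\<Prod>i\<in>Rn p n. \<zeta> powi (int (i * j) * c i)) * Pk p n \<tau> \<zeta> \<alpha>' k"
      unfolding Pk_def c_def by (simp add: power_int_mult_distrib power_int_power prod.distrib)
    also have "(\<Prod>i\<in>Rn p n. \<zeta> powi (int (i * j) * c i)) = \<zeta> powi (\<Sum>i\<in>Rn p n. int (i * j) * c i)"
      by (rule prod_powi_sum[OF z0])
    also have "\<dots> = \<zeta> powi int (j * k * (q mod p))"
    proof (rule root_powi_cong[OF zeta(1) p0])
      have "[(\<Sum>i\<in>Rn p n. int (i * j) * c i) = (\<Sum>i\<in>Rn p n. int j * int k)] (mod int p)"
      proof (rule cong_sum)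
        fix i assume i: "i \<in> Rn p n"
        have r: "0 < i" "i < p" using Rn_range[OF assms(1) i] by auto
        have c1: "[c i = int (fp_div p k i)] (mod int p)" unfolding c_def by (rule centred_rep_cong[OF assms(2)])
        have c2: "[int i * int (fp_div p k i) = int k] (mod int p)"
          using fp_div_cong(1)[OF assms(1) r, of k] by (metis cong_int_iff of_nat_mult)
        have "[int i * c i = int k] (mod int p)"
          using cong_trans[OF cong_mult[OF cong_refl[of "int i"] c1] c2] .
        hence "[int j * (int i * c i) = int j * int k] (mod int p)" by (rule cong_mult[OF cong_refl])
        thus "[int (i * j) * c i = int j * int k] (mod int p)" by (simp add: algebra_simps)
      qed
      moreover have "(\<Sum>i\<in>Rn p n. int j * int k) = int (j * k * q)" using cardR by simp
      moreover have "[int (j * k * q) = int (j * k * (q mod p))] (mod int p)"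
        by (metis cong_int_iff cong_mult cong_refl cong_mod_right cong_sym)
      ultimately show "[(\<Sum>i\<in>Rn p n. int (i * j) * c i) = int (j * k * (q mod p))] (mod int p)"
        by (metis cong_trans)
    qed
    also have "\<dots> = \<zeta> ^ (j * k * (q mod p))" by (rule power_int_of_nat)
    finally show ?thesis .
  qed
  show ?thesis
  proof (intro conjI allI impI)
    fix j k assume "j < p" "k < p"
    show "(\<tau> ^^ j) (Pk p n \<tau> \<zeta> \<alpha>' k) = \<zeta> ^ (j * k * (((p - 1) div n) mod p)) * Pk p n \<tau> \<zeta> \<alpha>' k"
      using part1 q_def by simp
  next
    fix j assume "j < p"
    have hj: "fhom (\<tau> ^^ j)" by (rule fhom_funpow[OF h])
    have "(\<tau> ^^ j) (1 / of_nat p) = 1 / of_nat p"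
      using fhom_inverse[OF hj] fhom_of_nat[OF hj] by (simp add: divide_inverse)
    thus "(\<tau> ^^ j) ((1 / of_nat p) * (\<Sum>k<p. Pk p n \<tau> \<zeta> \<alpha>' k))
            = (1 / of_nat p) * (\<Sum>k<p. \<zeta> ^ (j * k * (((p - 1) div n) mod p)) * Pk p n \<tau> \<zeta> \<alpha>' k)"
      unfolding fhom_mult[OF hj] fhom_sum[OF hj] part1 q_def by (simp only:)
  qed
qed

end
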